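(* Let $0<p,s<\infty$ and let $\mu$ be a finite positive Borel measure on $\mathbb{B}_n$. If a family $\mathcal{G}$ of functions in $T^p_s(\mu)$ is relatively compact in $T^p_s(\mu)$, then for every $\varepsilon>0$ there exists $r\in(0,1)$ such that $$\sup_{g\in\mathcal{G}}\int_{\mathbb{S}_n}\left(\int_{\Gamma(\zeta)\setminus\overline{B(0,r)}}|g(z)|^s\,d\mu(z)\right)^{p/s}d\sigma(\zeta)<\varepsilon.$$
   Context: $\mathbb{B}_n$ is the open unit ball of $\mathbb{C}^n$, $\mathbb{S}_n$ its boundary sphere with normalized surface measure $\sigma$, $\langle z,w\rangle=\sum z_i\bar w_i$, $B(0,r)$ the Euclidean ball of radius $r$ about $0$. Fix an aperture $\alpha>1$ and let $\Gamma(\zeta)=\{z\in\mathbb{B}_n:|1-\langle z,\zeta\rangle|<\alpha(1-|z|)\}$. The tent space $T^p_s(\mu)$ consists of measurable $g$ on $\mathbb{B}_n$ with $\|g\|^p_{T^p_s(\mu)}=\int_{\mathbb{S}_n}\left(\int_{\Gamma(\zeta)}|g(z)|^s\,d\mu(z)\right)^{p/s}d\sigma(\zeta)<\infty$. *)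

theory Defs
  imports "HOL-Analysis.Analysis"
begin

text \<open>C^n is modelled as complex^'n for a finite index type 'n (n = CARD('n) >= 1).\<close>

definition herm :: "complex^'n \<Rightarrow> complex^'n \<Rightarrow> complex" where
  "herm z w = (\<Sum>i\<in>UNIV. z $ i * cnj (w $ i))"

definition epowr :: "ennreal \<Rightarrow> real \<Rightarrow> ennreal" where
  "epowr x a = (if x = (\<infinity>::ennreal) then (\<infinity>::ennreal) else ennreal (enn2real x powr a))"

text \<open>Normalized surface measure on the unit sphere, realised as a Borel measure on C^n
  concentrated on the sphere: the push-forward of normalized Lebesgue measure on the
  unit ball under the radial projection x \<mapsto> x/|x|.\<close>
definition sphere_sigma :: "(complex^'n) measure" where
  "sphere_sigma = distr (uniform_measure lborel (ball 0 1)) borel (\<lambda>x. x /\<^sub>R norm x)"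

definition Gamma_region :: "real \<Rightarrow> complex^'n \<Rightarrow> (complex^'n) set" where
  "Gamma_region \<alpha> \<zeta> = {z \<in> ball 0 1. cmod (1 - herm z \<zeta>) < \<alpha> * (1 - norm z)}"

definition tent_int ::
  "real \<Rightarrow> real \<Rightarrow> real \<Rightarrow> (complex^'n) measure \<Rightarrow> (complex^'n) set \<Rightarrow> (complex^'n \<Rightarrow> complex) \<Rightarrow> ennreal" where
  "tent_int \<alpha> p s \<mu> E g =
     (\<integral>\<^sup>+ \<zeta>. epowr (\<integral>\<^sup>+ z. indicator (Gamma_region \<alpha> \<zeta> \<inter> E) z * ennreal (cmod (g z) powr s) \<partial>\<mu>) (p / s)
        \<partial>sphere_sigma)"

definition tent_space ::
  "real \<Rightarrow> real \<Rightarrow> real \<Rightarrow> (complex^'n) measure \<Rightarrow> (complex^'n \<Rightarrow> complex) set" where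
  "tent_space \<alpha> p s \<mu> = {g. g \<in> borel_measurable \<mu> \<and> tent_int \<alpha> p s \<mu> UNIV g < \<infinity>}"

definition tent_rel_compact ::
  "real \<Rightarrow> real \<Rightarrow> real \<Rightarrow> (complex^'n) measure \<Rightarrow> (complex^'n \<Rightarrow> complex) set \<Rightarrow> bool" where
  "tent_rel_compact \<alpha> p s \<mu> G \<longleftrightarrow>
     (\<forall>f :: nat \<Rightarrow> complex^'n \<Rightarrow> complex. (\<forall>k. f k \<in> G) \<longrightarrow>
        (\<exists>h r. h \<in> tent_space \<alpha> p s \<mu> \<and> strict_mono (r :: nat \<Rightarrow> nat) \<and>
           (\<lambda>k. tent_int \<alpha> p s \<mu> UNIV (\<lambda>z. f (r k) z - h z)) \<longlonglongrightarrow> 0))"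

end

theory Submission imports Defs begin

lemma epowr_measurable[measurable]:
  assumes [measurable]: "F \<in> borel_measurable M"
  shows "(\<lambda>x. epowr (F x) q) \<in> borel_measurable M"
  unfolding epowr_def by measurable

lemma epowr_zero: "q > 0 \<Longrightarrow> epowr 0 q = 0"
  by (simp add: epowr_def)

lemma epowr_infty_iff: "epowr x q = \<infinity> \<longleftrightarrow> x = \<infinity>"
  by (simp add: epowr_def)

lemma epowr_mono:
  assumes "x \<le> y" "q \<ge> 0" shows "epowr x q \<le> epowr y q"
proof (cases "y = \<infinity>")
  case True then show ?thesis by (simp add: epowr_def)
next
  case False
  then have "x \<noteq> \<infinity>" using assms(1) by (auto simp: top_unique)
  obtain a where a: "x = ennreal a" "0 \<le> a"
    using \<open>x \<noteq> \<infinity>\<close> by (cases x rule: ennreal_cases) auto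
  obtain b where b: "y = ennreal b" "0 \<le> b"
    using False by (cases y rule: ennreal_cases) auto
  note ab = a b
  then have "a \<le> b" using assms(1) by (simp add: ennreal_le_iff)
  then show ?thesis using ab False assms(2) \<open>x \<noteq> \<infinity>\<close>
    by (auto simp: epowr_def intro!: ennreal_leI powr_mono2)
qed

lemma real_quasi:
  fixes a b c q :: real
  assumes "0 \<le> a" "0 \<le> b" "0 < c" "0 < q"
  shows "(c * (a + b)) powr q \<le> c powr q * 2 powr q * (a powr q + b powr q)"
proof -
  have "(c * (a + b)) powr q = c powr q * (a + b) powr q"
    using assms by (simp add: powr_mult)
  also have "(a + b) powr q \<le> (2 * max a b) powr q"
    using assms by (intro powr_mono2) auto
  also have "(2 * max a b) powr q = 2 powr q * max a b powr q"
    using assms by (simp add: powr_mult)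
  also have "max a b powr q \<le> a powr q + b powr q"
    using assms by (auto simp: max_def)
  finally show ?thesis
    using assms by (simp add: mult_left_mono mult.assoc)
qed

lemma epowr_bound:
  assumes "q > 0" "c > 0"
  shows "epowr (ennreal c * (A + B)) q \<le> ennreal (c powr q * 2 powr q) * (epowr A q + epowr B q)"
proof (cases "A = \<infinity> \<or> B = \<infinity>")
  case True
  then have "epowr A q + epowr B q = \<infinity>" by (auto simp: epowr_def)
  moreover have "c powr q * 2 powr q > 0" using assms by simp
  ultimately have "ennreal (c powr q * 2 powr q) * (epowr A q + epowr B q) = \<infinity>"
    using assms by (simp add: ennreal_mult_eq_top_iff)
  then show ?thesis by simp
next
  case False
  obtain a where a: "A = ennreal a" "0 \<le> a"
    using False by (cases A rule: ennreal_cases) auto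
  obtain b where b: "B = ennreal b" "0 \<le> b"
    using False by (cases B rule: ennreal_cases) auto
  note ab = a b
  have eq: "ennreal c * (A + B) = ennreal (c * (a + b))"
    using ab assms by (simp add: ennreal_mult ennreal_plus)
  have "epowr (ennreal c * (A + B)) q = ennreal ((c * (a + b)) powr q)"
    unfolding eq epowr_def using ab assms by simp
  also have "\<dots> \<le> ennreal (c powr q * 2 powr q * (a powr q + b powr q))"
    by (intro ennreal_leI real_quasi) (use ab assms in auto)
  also have "\<dots> = ennreal (c powr q * 2 powr q) * (epowr A q + epowr B q)"
  proof -
    have "epowr A q = ennreal (a powr q)" "epowr B q = ennreal (b powr q)"
      using ab by (auto simp: epowr_def)
    then show ?thesis
      using assms by (simp add: ennreal_mult' ennreal_plus[symmetric] del: ennreal_plus)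
  qed
  finally show ?thesis .
qed


lemma open_Gamma_joint:
  "open {x :: (complex^'n) \<times> (complex^'n). snd x \<in> Gamma_region \<alpha> (fst x)}"
proof -
  have "{x :: (complex^'n) \<times> (complex^'n). snd x \<in> Gamma_region \<alpha> (fst x)} =
     {x. norm (snd x) < 1} \<inter> {x. cmod (1 - (\<Sum>i\<in>UNIV. snd x $ i * cnj (fst x $ i))) < \<alpha> * (1 - norm (snd x))}"
    by (auto simp: Gamma_region_def herm_def)
  also have "open \<dots>"
    by (intro open_Int open_Collect_less continuous_intros)
  finally show ?thesis .
qed

lemma meas_inner:
  fixes \<mu> :: "(complex^'n) measure"
  assumes sets: "sets \<mu> = sets borel" and fin: "finite_measure \<mu>"
    and E: "E \<in> sets borel" and f: "f \<in> borel_measurable \<mu>"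
  shows "(\<lambda>\<zeta>. \<integral>\<^sup>+ z. indicator (Gamma_region \<alpha> \<zeta> \<inter> E) z * f z \<partial>\<mu>) \<in> borel_measurable borel"
proof -
  interpret finite_measure \<mu> by fact
  let ?S = "{x :: (complex^'n) \<times> (complex^'n). snd x \<in> Gamma_region \<alpha> (fst x)}"
  have S: "?S \<in> sets (borel \<Otimes>\<^sub>M borel)"
    using open_Gamma_joint[of \<alpha>] unfolding borel_prod by (rule borel_open)
  have S': "?S \<in> sets (borel \<Otimes>\<^sub>M \<mu>)" by (subst sets_pair_measure_cong[OF refl sets]) (rule S)
  have E': "E \<in> sets \<mu>" using E sets by simp
  have "(\<lambda>x. indicator ?S x * (indicator E (snd x) * f (snd x))) \<in> borel_measurable (borel \<Otimes>\<^sub>M \<mu>)"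
    using S' E' f by measurable
  then have "case_prod (\<lambda>\<zeta> z. indicator (Gamma_region \<alpha> \<zeta> \<inter> E) z * f z) \<in> borel_measurable (borel \<Otimes>\<^sub>M \<mu>)"
    by (rule measurable_cong[THEN iffD1, rotated])
       (auto simp: indicator_def split: prod.splits)
  then show ?thesis by (rule borel_measurable_nn_integral)
qed

lemma sets_sphere_sigma: "sets (sphere_sigma :: (complex^'n) measure) = sets borel"
  by (simp add: sphere_sigma_def)

lemma tent_quasi:
  fixes \<mu> :: "(complex^'n) measure"
  assumes p: "0 < p" and s: "0 < s"
    and sets: "sets \<mu> = sets borel" and fin: "finite_measure \<mu>"
    and g[measurable]: "g \<in> borel_measurable \<mu>" and h[measurable]: "h \<in> borel_measurable \<mu>"
    and E: "E \<in> sets borel"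
  shows "tent_int \<alpha> p s \<mu> E g \<le> ennreal ((2 powr s) powr (p/s) * 2 powr (p/s)) *
           (tent_int \<alpha> p s \<mu> UNIV (\<lambda>z. g z - h z) + tent_int \<alpha> p s \<mu> E h)"
proof -
  define I where "I = (\<lambda>E f \<zeta>. \<integral>\<^sup>+ z. indicator (Gamma_region \<alpha> \<zeta> \<inter> E) z * ennreal (cmod (f z) powr s) \<partial>\<mu>)"
  have Emu[measurable]: "E \<in> sets \<mu>" using E sets by simp
  have gh[measurable]: "(\<lambda>z. g z - h z) \<in> borel_measurable \<mu>" by measurable
  have measI: "(\<lambda>\<zeta>. epowr (I E' f \<zeta>) q) \<in> borel_measurable sphere_sigma"
    if "E' \<in> sets borel" "f \<in> borel_measurable \<mu>" for E' f q
  proof -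
    have "(\<lambda>\<zeta>. I E' f \<zeta>) \<in> borel_measurable borel"
      unfolding I_def using that(2) by (intro meas_inner[OF sets fin that(1)]) measurable
    then have "(\<lambda>\<zeta>. I E' f \<zeta>) \<in> borel_measurable sphere_sigma"
      by (simp add: measurable_cong_sets[OF sets_sphere_sigma refl])
    then show ?thesis by measurable
  qed
  have GammaM: "Gamma_region \<alpha> \<zeta> \<in> sets \<mu>" for \<zeta>
  proof -
    have "open (Gamma_region \<alpha> \<zeta>)"
    proof -
      have "Gamma_region \<alpha> \<zeta> = {z. norm z < 1} \<inter> {z. cmod (1 - (\<Sum>i\<in>UNIV. z $ i * cnj (\<zeta> $ i))) < \<alpha> * (1 - norm z)}"
        by (auto simp: Gamma_region_def herm_def)
      also have "open \<dots>"
        by (intro open_Int open_Collect_less continuous_intros)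
      finally show ?thesis .
    qed
    then show ?thesis using sets by simp
  qed
  have pw: "I E g \<zeta> \<le> ennreal (2 powr s) * (I UNIV (\<lambda>z. g z - h z) \<zeta> + I E h \<zeta>)" for \<zeta>
  proof -
    have "I E g \<zeta> \<le> (\<integral>\<^sup>+ z. ennreal (2 powr s) * (indicator (Gamma_region \<alpha> \<zeta> \<inter> UNIV) z * ennreal (cmod (g z - h z) powr s)
                 + indicator (Gamma_region \<alpha> \<zeta> \<inter> E) z * ennreal (cmod (h z) powr s)) \<partial>\<mu>)"
      unfolding I_def
    proof (intro nn_integral_mono)
      fix z
      show "indicator (Gamma_region \<alpha> \<zeta> \<inter> E) z * ennreal (cmod (g z) powr s)
         \<le> ennreal (2 powr s) * (indicator (Gamma_region \<alpha> \<zeta> \<inter> UNIV) z * ennreal (cmod (g z - h z) powr s)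
                 + indicator (Gamma_region \<alpha> \<zeta> \<inter> E) z * ennreal (cmod (h z) powr s))"
      proof (cases "z \<in> Gamma_region \<alpha> \<zeta> \<inter> E")
        case True
        have "cmod (g z) powr s \<le> (1 * (cmod (g z - h z) + cmod (h z))) powr s"
          using norm_triangle_ineq[of "g z - h z" "h z"] s by (intro powr_mono2) auto
        also have "\<dots> \<le> 1 powr s * 2 powr s * (cmod (g z - h z) powr s + cmod (h z) powr s)"
          by (rule real_quasi) (use s in auto)
        finally have "ennreal (cmod (g z) powr s) \<le> ennreal (2 powr s * (cmod (g z - h z) powr s + cmod (h z) powr s))"
          by (intro ennreal_leI) simp
        then show ?thesis using True
          by (simp add: ennreal_mult' ennreal_plus[symmetric] del: ennreal_plus)
      qed simp
    qed
    also have "\<dots> = ennreal (2 powr s) * (I UNIV (\<lambda>z. g z - h z) \<zeta> + I E h \<zeta>)"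
    proof -
      have [measurable]: "Gamma_region \<alpha> \<zeta> \<in> sets \<mu>" by (rule GammaM)
      have "(\<integral>\<^sup>+ z. indicator (Gamma_region \<alpha> \<zeta> \<inter> UNIV) z * ennreal (cmod (g z - h z) powr s)
                 + indicator (Gamma_region \<alpha> \<zeta> \<inter> E) z * ennreal (cmod (h z) powr s) \<partial>\<mu>)
          = I UNIV (\<lambda>z. g z - h z) \<zeta> + I E h \<zeta>"
        unfolding I_def by (rule nn_integral_add) measurable
      moreover have "(\<integral>\<^sup>+ z. ennreal (2 powr s) * (indicator (Gamma_region \<alpha> \<zeta> \<inter> UNIV) z * ennreal (cmod (g z - h z) powr s)
                 + indicator (Gamma_region \<alpha> \<zeta> \<inter> E) z * ennreal (cmod (h z) powr s)) \<partial>\<mu>)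
          = ennreal (2 powr s) * (\<integral>\<^sup>+ z. indicator (Gamma_region \<alpha> \<zeta> \<inter> UNIV) z * ennreal (cmod (g z - h z) powr s)
                 + indicator (Gamma_region \<alpha> \<zeta> \<inter> E) z * ennreal (cmod (h z) powr s) \<partial>\<mu>)"
        by (rule nn_integral_cmult) measurable
      ultimately show ?thesis by simp
    qed
    finally show ?thesis .
  qed
  have "tent_int \<alpha> p s \<mu> E g = (\<integral>\<^sup>+ \<zeta>. epowr (I E g \<zeta>) (p/s) \<partial>sphere_sigma)"
    by (simp add: tent_int_def I_def)
  also have "\<dots> \<le> (\<integral>\<^sup>+ \<zeta>. ennreal ((2 powr s) powr (p/s) * 2 powr (p/s)) *
        (epowr (I UNIV (\<lambda>z. g z - h z) \<zeta>) (p/s) + epowr (I E h \<zeta>) (p/s)) \<partial>sphere_sigma)"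
  proof (intro nn_integral_mono)
    fix \<zeta>
    have "epowr (I E g \<zeta>) (p/s) \<le> epowr (ennreal (2 powr s) * (I UNIV (\<lambda>z. g z - h z) \<zeta> + I E h \<zeta>)) (p/s)"
      by (intro epowr_mono pw) (use p s in auto)
    also have "\<dots> \<le> ennreal ((2 powr s) powr (p/s) * 2 powr (p/s)) *
        (epowr (I UNIV (\<lambda>z. g z - h z) \<zeta>) (p/s) + epowr (I E h \<zeta>) (p/s))"
      by (rule epowr_bound) (use p s in auto)
    finally show "epowr (I E g \<zeta>) (p/s) \<le> \<dots>" .
  qed
  also have "\<dots> = ennreal ((2 powr s) powr (p/s) * 2 powr (p/s)) *
           (tent_int \<alpha> p s \<mu> UNIV (\<lambda>z. g z - h z) + tent_int \<alpha> p s \<mu> E h)"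
  proof -
    have [measurable]: "(\<lambda>\<zeta>. epowr (I UNIV (\<lambda>z. g z - h z) \<zeta>) (p/s)) \<in> borel_measurable sphere_sigma"
      by (rule measI) auto
    have [measurable]: "(\<lambda>\<zeta>. epowr (I E h \<zeta>) (p/s)) \<in> borel_measurable sphere_sigma"
      by (rule measI[OF E h])
    have "(\<integral>\<^sup>+ \<zeta>. ennreal ((2 powr s) powr (p/s) * 2 powr (p/s)) *
        (epowr (I UNIV (\<lambda>z. g z - h z) \<zeta>) (p/s) + epowr (I E h \<zeta>) (p/s)) \<partial>sphere_sigma)
      = ennreal ((2 powr s) powr (p/s) * 2 powr (p/s)) * (\<integral>\<^sup>+ \<zeta>. 
        (epowr (I UNIV (\<lambda>z. g z - h z) \<zeta>) (p/s) + epowr (I E h \<zeta>) (p/s)) \<partial>sphere_sigma)"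
      by (rule nn_integral_cmult) measurable
    also have "(\<integral>\<^sup>+ \<zeta>. 
        (epowr (I UNIV (\<lambda>z. g z - h z) \<zeta>) (p/s) + epowr (I E h \<zeta>) (p/s)) \<partial>sphere_sigma)
      = tent_int \<alpha> p s \<mu> UNIV (\<lambda>z. g z - h z) + tent_int \<alpha> p s \<mu> E h"
    proof -
      have eq: "tent_int \<alpha> p s \<mu> E' f = (\<integral>\<^sup>+ \<zeta>. epowr (I E' f \<zeta>) (p/s) \<partial>sphere_sigma)" for E' f
        by (simp add: tent_int_def I_def)
      show ?thesis unfolding eq by (rule nn_integral_add) measurable
    qed
    finally show ?thesis .
  qed
  finally show ?thesis .
qed


lemma meas_F:
  fixes \<mu> :: "(complex^'n) measure"
  assumes sets: "sets \<mu> = sets borel" and fin: "finite_measure \<mu>"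
    and E: "E \<in> sets borel" and f: "f \<in> borel_measurable \<mu>"
  shows "(\<lambda>\<zeta>. epowr (\<integral>\<^sup>+ z. indicator (Gamma_region \<alpha> \<zeta> \<inter> E) z * ennreal (cmod (f z) powr s) \<partial>\<mu>) q)
           \<in> borel_measurable sphere_sigma"
proof -
  have "(\<lambda>\<zeta>. \<integral>\<^sup>+ z. indicator (Gamma_region \<alpha> \<zeta> \<inter> E) z * ennreal (cmod (f z) powr s) \<partial>\<mu>) \<in> borel_measurable borel"
    using f by (intro meas_inner[OF sets fin E]) measurable
  then have "(\<lambda>\<zeta>. \<integral>\<^sup>+ z. indicator (Gamma_region \<alpha> \<zeta> \<inter> E) z * ennreal (cmod (f z) powr s) \<partial>\<mu>) \<in> borel_measurable sphere_sigma"
    by (simp add: measurable_cong_sets[OF sets_sphere_sigma refl])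
  then show ?thesis by measurable
qed

lemma exists_rr:
  fixes x :: real
  assumes "x < 1"
  shows "\<exists>k::nat. x \<le> 1 - 1 / (real k + 2)"
proof -
  obtain k :: nat where k: "1 / (1 - x) < real k" by (meson reals_Archimedean2)
  have pos: "0 < 1 - x" using assms by simp
  have "1 < real k * (1 - x)" using k pos by (simp add: divide_less_eq mult.commute)
  then have "1 < (real k + 2) * (1 - x)" using pos by (simp add: distrib_right)
  then have "1 / (real k + 2) < 1 - x" by (simp add: divide_less_eq mult.commute)
  then show ?thesis by (intro exI[of _ k]) simp
qed

lemma tail_tendsto:
  fixes \<mu> :: "(complex^'n) measure"
  assumes p: "0 < p" and s: "0 < s"
    and sets: "sets \<mu> = sets borel" and fin: "finite_measure \<mu>"
    and h[measurable]: "h \<in> borel_measurable \<mu>"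
    and hfin: "tent_int \<alpha> p s \<mu> UNIV h < \<infinity>"
  shows "(\<lambda>k. tent_int \<alpha> p s \<mu> (- cball 0 (1 - 1 / (real k + 2))) h) \<longlonglongrightarrow> 0"
proof -
  define E where "E = (\<lambda>k::nat. - cball (0::complex^'n) (1 - 1 / (real k + 2)))"
  define I where "I = (\<lambda>E \<zeta>. \<integral>\<^sup>+ z. indicator (Gamma_region \<alpha> \<zeta> \<inter> E) z * ennreal (cmod (h z) powr s) \<partial>\<mu>)"
  define F where "F = (\<lambda>k \<zeta>. epowr (I (E k) \<zeta>) (p/s))"
  have Eb: "E k \<in> sets borel" for k unfolding E_def by auto
  have Emu[measurable]: "E k \<in> sets \<mu>" for k using Eb sets by simp
  have Esub: "E (Suc k) \<subseteq> E k" for k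
  proof -
    have "1 - 1 / (real k + 2) \<le> 1 - 1 / (real (Suc k) + 2)"
      by (simp add: frac_le)
    then show ?thesis unfolding E_def by auto
  qed
  have Imono: "I A \<zeta> \<le> I B \<zeta>" if "A \<subseteq> B" for A B \<zeta>
    unfolding I_def using that
    by (intro nn_integral_mono) (auto simp: indicator_def)
  have measF[measurable]: "F k \<in> borel_measurable sphere_sigma" for k
    unfolding F_def I_def by (rule meas_F[OF sets fin Eb h])
  have measU: "(\<lambda>\<zeta>. epowr (I UNIV \<zeta>) (p/s)) \<in> borel_measurable sphere_sigma"
    unfolding I_def by (rule meas_F[OF sets fin _ h]) auto
  have Fdec: "F (Suc k) \<zeta> \<le> F k \<zeta>" for k \<zeta>
    unfolding F_def using p s by (intro epowr_mono Imono Esub) auto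
  have tent_eq: "tent_int \<alpha> p s \<mu> (E k) h = integral\<^sup>N sphere_sigma (F k)" for k
    by (simp add: tent_int_def F_def I_def)
  have tentU: "tent_int \<alpha> p s \<mu> UNIV h = (\<integral>\<^sup>+ \<zeta>. epowr (I UNIV \<zeta>) (p/s) \<partial>sphere_sigma)"
    by (simp add: tent_int_def I_def)
  have F0: "(\<integral>\<^sup>+ \<zeta>. F 0 \<zeta> \<partial>sphere_sigma) < \<infinity>"
  proof -
    have "(\<integral>\<^sup>+ \<zeta>. F 0 \<zeta> \<partial>sphere_sigma) \<le> (\<integral>\<^sup>+ \<zeta>. epowr (I UNIV \<zeta>) (p/s) \<partial>sphere_sigma)"
      unfolding F_def using p s by (intro nn_integral_mono epowr_mono Imono) auto
    then show ?thesis using hfin tentU by simp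
  qed
  have AEfin: "AE \<zeta> in sphere_sigma. epowr (I UNIV \<zeta>) (p/s) \<noteq> \<infinity>"
    by (rule nn_integral_PInf_AE[OF measU]) (use hfin tentU in simp)
  have INF0: "(INF k. F k \<zeta>) = 0" if fin\<zeta>: "epowr (I UNIV \<zeta>) (p/s) \<noteq> \<infinity>" for \<zeta>
  proof -
    have Ufin: "I UNIV \<zeta> \<noteq> \<infinity>" using fin\<zeta> epowr_infty_iff by metis
    have Ikfin: "I (E k) \<zeta> \<noteq> \<infinity>" for k
      using Imono[of "E k" UNIV \<zeta>] Ufin by (auto simp: top_unique)
    define G where "G = (\<lambda>k z. indicator (Gamma_region \<alpha> \<zeta> \<inter> E k) z * ennreal (cmod (h z) powr s))"
    have GM[measurable]: "G k \<in> borel_measurable \<mu>" for k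
    proof -
      have "Gamma_region \<alpha> \<zeta> \<in> sets \<mu>"
      proof -
        have "Gamma_region \<alpha> \<zeta> = {z. norm z < 1} \<inter> {z. cmod (1 - (\<Sum>i\<in>UNIV. z $ i * cnj (\<zeta> $ i))) < \<alpha> * (1 - norm z)}"
          by (auto simp: Gamma_region_def herm_def)
        also have "open \<dots>"
          by (intro open_Int open_Collect_less continuous_intros)
        finally show ?thesis using sets by simp
      qed
      then show ?thesis unfolding G_def by measurable
    qed
    have "(\<integral>\<^sup>+ z. (INF k. G k z) \<partial>\<mu>) = (INF k. integral\<^sup>N \<mu> (G k))"
    proof (rule nn_integral_monotone_convergence_INF_AE')
      show "AE z in \<mu>. G (Suc k) z \<le> G k z" for k
        using Esub[of k] by (auto simp: G_def indicator_def)
      show "(\<integral>\<^sup>+ z. G 0 z \<partial>\<mu>) < \<infinity>"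
        using Ikfin[of 0] by (simp add: G_def I_def less_top)
    qed measurable
    moreover have "(INF k. G k z) = 0" for z
    proof (cases "z \<in> Gamma_region \<alpha> \<zeta>")
      case True
      then have "norm z < 1" by (simp add: Gamma_region_def)
      then obtain k where "norm z \<le> 1 - 1 / (real k + 2)" using exists_rr by blast
      then have "G k z = 0" by (simp add: G_def E_def indicator_def)
      then have "(INF k. G k z) \<le> 0" by (metis INF_lower UNIV_I)
      then show ?thesis by simp
    next
      case False
      then show ?thesis by (simp add: G_def indicator_def)
    qed
    ultimately have INFI: "(INF k. I (E k) \<zeta>) = 0"
      by (simp add: G_def I_def)
    have "decseq (\<lambda>k. I (E k) \<zeta>)"
      by (intro decseq_SucI Imono Esub)
    then have "(\<lambda>k. I (E k) \<zeta>) \<longlonglongrightarrow> 0"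
      using LIMSEQ_INF INFI by metis
    then have "(\<lambda>k. enn2real (I (E k) \<zeta>)) \<longlonglongrightarrow> enn2real 0"
      by (intro tendsto_enn2real) auto
    then have "(\<lambda>k. enn2real (I (E k) \<zeta>) powr (p/s)) \<longlonglongrightarrow> 0"
      by (intro tendsto_zero_powrI[where b="p/s"]) (use p s in auto)
    then have "(\<lambda>k. ennreal (enn2real (I (E k) \<zeta>) powr (p/s))) \<longlonglongrightarrow> ennreal 0"
      by (intro tendsto_ennrealI)
    moreover have "F k \<zeta> = ennreal (enn2real (I (E k) \<zeta>) powr (p/s))" for k
      using Ikfin[of k] by (simp add: F_def epowr_def)
    ultimately have lim: "(\<lambda>k. F k \<zeta>) \<longlonglongrightarrow> 0" by simp
    have "decseq (\<lambda>k. F k \<zeta>)" by (intro decseq_SucI Fdec)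
    then have "(\<lambda>k. F k \<zeta>) \<longlonglongrightarrow> (INF k. F k \<zeta>)" by (rule LIMSEQ_INF)
    then show ?thesis using lim LIMSEQ_unique by blast
  qed
  have "(\<integral>\<^sup>+ \<zeta>. (INF k. F k \<zeta>) \<partial>sphere_sigma) = (INF k. integral\<^sup>N sphere_sigma (F k))"
    by (rule nn_integral_monotone_convergence_INF_AE') (use Fdec F0 in auto)
  moreover have "(\<integral>\<^sup>+ \<zeta>. (INF k. F k \<zeta>) \<partial>sphere_sigma) = (\<integral>\<^sup>+ \<zeta>. 0 \<partial>(sphere_sigma :: (complex^'n) measure))"
    by (rule nn_integral_cong_AE) (use AEfin INF0 in auto)
  ultimately have INFT: "(INF k. tent_int \<alpha> p s \<mu> (E k) h) = 0"
    by (simp add: tent_eq)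
  have "decseq (\<lambda>k. tent_int \<alpha> p s \<mu> (E k) h)"
    unfolding tent_eq by (intro decseq_SucI nn_integral_mono Fdec)
  then have "(\<lambda>k. tent_int \<alpha> p s \<mu> (E k) h) \<longlonglongrightarrow> 0"
    using LIMSEQ_INF INFT by metis
  then show ?thesis by (simp add: E_def)
qed


theorem lemma5p3:
  fixes \<mu> :: "(complex^'n) measure"
    and G :: "(complex^'n \<Rightarrow> complex) set"
    and \<alpha> p s \<epsilon> :: real
  assumes "\<alpha> > 1" and "0 < p" and "0 < s"
    and "sets \<mu> = sets borel" and "finite_measure \<mu>"
    and "emeasure \<mu> (- ball 0 1) = 0"
    and "G \<subseteq> tent_space \<alpha> p s \<mu>"
    and "tent_rel_compact \<alpha> p s \<mu> G"
    and "\<epsilon> > 0"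
  shows "\<exists>r. 0 < r \<and> r < 1 \<and>
           (SUP g\<in>G. tent_int \<alpha> p s \<mu> (- cball 0 r) g) < ennreal \<epsilon>"
proof (rule ccontr)
  assume neg: "\<not> ?thesis"
  define rr where "rr = (\<lambda>k::nat. 1 - 1 / (real k + 2))"
  have rr: "0 < rr k \<and> rr k < 1" for k
    unfolding rr_def by (simp add: divide_less_eq)
  have "\<exists>g\<in>G. ennreal (\<epsilon>/2) < tent_int \<alpha> p s \<mu> (- cball 0 (rr k)) g" for k
  proof -
    have "ennreal \<epsilon> \<le> (SUP g\<in>G. tent_int \<alpha> p s \<mu> (- cball 0 (rr k)) g)"
      using neg rr[of k] by (metis not_less)
    moreover have "ennreal (\<epsilon>/2) < ennreal \<epsilon>"
      using assms(9) by (simp add: ennreal_lessI)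
    ultimately have "ennreal (\<epsilon>/2) < (SUP g\<in>G. tent_int \<alpha> p s \<mu> (- cball 0 (rr k)) g)"
      by (rule order.strict_trans2[rotated])
    then show ?thesis by (simp add: less_SUP_iff)
  qed
  then obtain f where fG: "\<And>k. f k \<in> G"
    and fbig: "\<And>k. ennreal (\<epsilon>/2) < tent_int \<alpha> p s \<mu> (- cball 0 (rr k)) (f k)"
    by metis
  obtain h \<sigma> where h: "h \<in> tent_space \<alpha> p s \<mu>" and \<sigma>: "strict_mono (\<sigma> :: nat \<Rightarrow> nat)"
    and conv: "(\<lambda>k. tent_int \<alpha> p s \<mu> UNIV (\<lambda>z. f (\<sigma> k) z - h z)) \<longlonglongrightarrow> 0"
    using assms(8) fG unfolding tent_rel_compact_def by blast
  have hm: "h \<in> borel_measurable \<mu>" and hfin: "tent_int \<alpha> p s \<mu> UNIV h < \<infinity>"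
    using h by (auto simp: tent_space_def)
  have fm: "f k \<in> borel_measurable \<mu>" for k
    using fG assms(7) by (auto simp: tent_space_def)
  have T: "(\<lambda>k. tent_int \<alpha> p s \<mu> (- cball 0 (rr k)) h) \<longlonglongrightarrow> 0"
    unfolding rr_def by (rule tail_tendsto[OF assms(2,3,4,5) hm hfin])
  have T\<sigma>: "(\<lambda>j. tent_int \<alpha> p s \<mu> (- cball 0 (rr (\<sigma> j))) h) \<longlonglongrightarrow> 0"
    using LIMSEQ_subseq_LIMSEQ[OF T \<sigma>] by (simp add: comp_def)
  define K where "K = ennreal ((2 powr s) powr (p/s) * 2 powr (p/s))"
  have "(\<lambda>j. K * (tent_int \<alpha> p s \<mu> UNIV (\<lambda>z. f (\<sigma> j) z - h z) + tent_int \<alpha> p s \<mu> (- cball 0 (rr (\<sigma> j))) h))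
          \<longlonglongrightarrow> K * (0 + 0)"
    by (intro ennreal_tendsto_cmult tendsto_add conv T\<sigma>) (simp add: K_def)
  then have "eventually (\<lambda>j. K * (tent_int \<alpha> p s \<mu> UNIV (\<lambda>z. f (\<sigma> j) z - h z) + tent_int \<alpha> p s \<mu> (- cball 0 (rr (\<sigma> j))) h)
          < ennreal (\<epsilon>/2)) sequentially"
    by (rule order_tendstoD(2)) (use assms(9) in simp)
  then obtain j where j: "K * (tent_int \<alpha> p s \<mu> UNIV (\<lambda>z. f (\<sigma> j) z - h z) + tent_int \<alpha> p s \<mu> (- cball 0 (rr (\<sigma> j))) h)
          < ennreal (\<epsilon>/2)"
    by (auto simp: eventually_sequentially)
  have "tent_int \<alpha> p s \<mu> (- cball 0 (rr (\<sigma> j))) (f (\<sigma> j)) \<le>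
       K * (tent_int \<alpha> p s \<mu> UNIV (\<lambda>z. f (\<sigma> j) z - h z) + tent_int \<alpha> p s \<mu> (- cball 0 (rr (\<sigma> j))) h)"
    unfolding K_def by (rule tent_quasi[OF assms(2,3,4,5) fm hm]) auto
  then show False using j fbig[of "\<sigma> j"] by simp
qed

end
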